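(* For any fuzzifying topological space $(X,\tau)$ and $A\subseteq X$, $$\max\big(0,\ L_PC(X,\tau)+F_P(A)-1\big)\le L_PC(A,\tau/A),$$ i.e. $\vDash (X,\tau)\in L_PC\otimes A\in F_P\to(A,\tau/A)\in L_PC$.
   Context: Łukasiewicz semantics: $[\varphi\otimes\psi]=\max(0,[\varphi]+[\psi]-1)$, $[\varphi\to\psi]=\min(1,1-[\varphi]+[\psi])$, $[\forall]=\inf$, $[\exists]=\sup$, $\vDash$ means value $1$. A fuzzifying topology on $X$ is $\tau:P(X)\to[0,1]$ with $\tau(X)=1$, $\tau(A\cap B)\ge\min(\tau(A),\tau(B))$, $\tau(\bigcup A_\lambda)\ge\inf\tau(A_\lambda)$. $N_x(A)=\sup_{x\in B\subseteq A}\tau(B)$; $Cl(A)(x)=1-N_x(X\setminus A)$; for $\mu:X\to[0,1]$, $Int(\mu)(x)=\sup_{x\in B}\min(\tau(B),\inf_{y\in B}\mu(y))$. Pre-open degrees $\tau_P(A)=\inf_{x\in A}Int(Cl(A))(x)$; $F_P(A)=\tau_P(X\setminus A)$; $N^P_x(A)=\sup_{x\in B\subseteq A}\tau_P(B)$. For $G\subseteq X$: $(\tau_P/G)(B)=\sup\{\tau_P(V):V\cap G=B\}$, $B\subseteq G$. Compactness degree of a set $G$ w.r.t. $\rho:P(G)\to[0,1]$: with $K(\Re,G)=\inf_{x\in G}\sup_{B\ni x}\Re(B)$, $[\Re\subseteq\rho]=\inf_B\min(1,1-\Re(B)+\rho(B))$, $\wp\le\Re$ pointwise, $FF(\wp)=1-\inf\{\delta\in[0,1]:\{B:\wp(B)>\delta\}\text{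 finite}\}$, $\Gamma(G,\rho)=\inf_{\Re}\min\big(1,1-\max(0,K(\Re,G)+[\Re\subseteq\rho]-1)+\sup_{\wp\le\Re}\max(0,K(\wp,G)+FF(\wp)-1)\big)$. $\Gamma_P(G)=\Gamma(G,\tau_P/G)$. Locally strong compactness: $L_PC(X,\tau)=\inf_{x\in X}\sup_{B\subseteq X}\max(0,N^P_x(B)+\Gamma_P(B)-1)$; for the subspace, with $N^{P^A}_x(G)=\sup_{x\in C\subseteq G}(\tau_P/A)(C)$, $L_PC(A,\tau/A)=\inf_{x\in A}\sup_{G\subseteq A}\max(0,N^{P^A}_x(G)+\Gamma(G,\tau_P/G)-1)$. *)

theory Defs
  imports Complex_Main
begin

text \<open>Truth values live in [0,1]; infimum of the empty family is 1, supremum of the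
empty family is 0 (the usual conventions of fuzzy logic).  A space is given by an
explicit carrier X :: 'a set and tau :: 'a set => real, only its values on subsets of X matter.\<close>

definition Inf01 :: "real set \<Rightarrow> real" where
  "Inf01 S = (if S = {} then 1 else Inf S)"

definition Sup01 :: "real set \<Rightarrow> real" where
  "Sup01 S = (if S = {} then 0 else Sup S)"

definition fuzzifying_topology :: "'a set \<Rightarrow> ('a set \<Rightarrow> real) \<Rightarrow> bool" where
  "fuzzifying_topology X \<tau> \<longleftrightarrow>
     (\<forall>A. A \<subseteq> X \<longrightarrow> 0 \<le> \<tau> A \<and> \<tau> A \<le> 1) \<and>
     \<tau> X = 1 \<and>
     (\<forall>A B. A \<subseteq> X \<longrightarrow> B \<subseteq> X \<longrightarrow> \<tau> (A \<inter> B) \<ge> min (\<tau> A) (\<tau> B)) \<and>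
     (\<forall>\<A>. \<A> \<subseteq> Pow X \<longrightarrow> \<tau> (\<Union>\<A>) \<ge> Inf01 (\<tau> ` \<A>))"

definition fnbhd :: "'a set \<Rightarrow> ('a set \<Rightarrow> real) \<Rightarrow> 'a \<Rightarrow> 'a set \<Rightarrow> real" where
  "fnbhd X \<tau> x A = Sup01 {\<tau> B | B. x \<in> B \<and> B \<subseteq> A \<and> B \<subseteq> X}"

definition fcl :: "'a set \<Rightarrow> ('a set \<Rightarrow> real) \<Rightarrow> 'a set \<Rightarrow> 'a \<Rightarrow> real" where
  "fcl X \<tau> A x = 1 - fnbhd X \<tau> x (X - A)"

definition fint :: "'a set \<Rightarrow> ('a set \<Rightarrow> real) \<Rightarrow> ('a \<Rightarrow> real) \<Rightarrow> 'a \<Rightarrow> real" where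
  "fint X \<tau> \<mu> x = Sup01 {min (\<tau> B) (Inf01 (\<mu> ` B)) | B. x \<in> B \<and> B \<subseteq> X}"

definition tauP :: "'a set \<Rightarrow> ('a set \<Rightarrow> real) \<Rightarrow> 'a set \<Rightarrow> real" where
  "tauP X \<tau> A = Inf01 ((\<lambda>x. fint X \<tau> (fcl X \<tau> A) x) ` A)"

definition FP :: "'a set \<Rightarrow> ('a set \<Rightarrow> real) \<Rightarrow> 'a set \<Rightarrow> real" where
  "FP X \<tau> A = tauP X \<tau> (X - A)"

definition NP :: "'a set \<Rightarrow> ('a set \<Rightarrow> real) \<Rightarrow> 'a \<Rightarrow> 'a set \<Rightarrow> real" where
  "NP X \<tau> x A = Sup01 {tauP X \<tau> B | B. x \<in> B \<and> B \<subseteq> A \<and> B \<subseteq> X}"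

definition tauP_rel :: "'a set \<Rightarrow> ('a set \<Rightarrow> real) \<Rightarrow> 'a set \<Rightarrow> 'a set \<Rightarrow> real" where
  "tauP_rel X \<tau> G B = Sup01 {tauP X \<tau> V | V. V \<subseteq> X \<and> V \<inter> G = B}"

definition fam01 :: "'a set \<Rightarrow> ('a set \<Rightarrow> real) \<Rightarrow> bool" where
  "fam01 G R \<longleftrightarrow> (\<forall>B. B \<subseteq> G \<longrightarrow> 0 \<le> R B \<and> R B \<le> 1)"

definition Kdeg :: "('a set \<Rightarrow> real) \<Rightarrow> 'a set \<Rightarrow> real" where
  "Kdeg R G = Inf01 ((\<lambda>x. Sup01 {R B | B. x \<in> B \<and> B \<subseteq> G}) ` G)"

definition subdeg :: "'a set \<Rightarrow> ('a set \<Rightarrow> real) \<Rightarrow> ('a set \<Rightarrow> real) \<Rightarrow> real" where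
  "subdeg G R \<rho> = Inf01 {min 1 (1 - R B + \<rho> B) | B. B \<subseteq> G}"

definition FFdeg :: "'a set \<Rightarrow> ('a set \<Rightarrow> real) \<Rightarrow> real" where
  "FFdeg G P = 1 - Inf01 {\<delta>. 0 \<le> \<delta> \<and> \<delta> \<le> 1 \<and> finite {B. B \<subseteq> G \<and> P B > \<delta>}}"

definition Gamma :: "'a set \<Rightarrow> ('a set \<Rightarrow> real) \<Rightarrow> real" where
  "Gamma G \<rho> = Inf01 {min 1 (1 - max 0 (Kdeg R G + subdeg G R \<rho> - 1)
        + Sup01 {max 0 (Kdeg P G + FFdeg G P - 1) | P.
                   fam01 G P \<and> (\<forall>B. B \<subseteq> G \<longrightarrow> P B \<le> R B)}) | R. fam01 G R}"

definition GammaP :: "'a set \<Rightarrow> ('a set \<Rightarrow> real) \<Rightarrow> 'a set \<Rightarrow> real" where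
  "GammaP X \<tau> G = Gamma G (tauP_rel X \<tau> G)"

definition LPC :: "'a set \<Rightarrow> ('a set \<Rightarrow> real) \<Rightarrow> real" where
  "LPC X \<tau> = Inf01 ((\<lambda>x. Sup01 {max 0 (NP X \<tau> x B + GammaP X \<tau> B - 1) | B. B \<subseteq> X}) ` X)"

definition NPsub :: "'a set \<Rightarrow> ('a set \<Rightarrow> real) \<Rightarrow> 'a set \<Rightarrow> 'a \<Rightarrow> 'a set \<Rightarrow> real" where
  "NPsub X \<tau> A x G = Sup01 {tauP_rel X \<tau> A C | C. x \<in> C \<and> C \<subseteq> G}"

definition LPC_sub :: "'a set \<Rightarrow> ('a set \<Rightarrow> real) \<Rightarrow> 'a set \<Rightarrow> real" where
  "LPC_sub X \<tau> A = Inf01 ((\<lambda>x. Sup01 {max 0 (NPsub X \<tau> A x G + GammaP X \<tau> G - 1) | G. G \<subseteq> A}) ` A)"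

end

theory Submission
  imports Defs
begin

lemma Sup01_upper: "x \<in> S \<Longrightarrow> bdd_above S \<Longrightarrow> x \<le> Sup01 S"
  unfolding Sup01_def by (auto intro: cSup_upper)

lemma Sup01_least: "(\<And>s. s \<in> S \<Longrightarrow> s \<le> t) \<Longrightarrow> 0 \<le> t \<Longrightarrow> Sup01 S \<le> t"
  unfolding Sup01_def by (auto intro: cSup_least)

lemma Inf01_lower: "x \<in> S \<Longrightarrow> bdd_below S \<Longrightarrow> Inf01 S \<le> x"
  unfolding Inf01_def by (auto intro: cInf_lower)

lemma Inf01_greatest: "(\<And>s. s \<in> S \<Longrightarrow> t \<le> s) \<Longrightarrow> t \<le> 1 \<Longrightarrow> t \<le> Inf01 S"
  unfolding Inf01_def by (auto intro: cInf_greatest)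

lemma bdd_above1: "(\<And>s. s \<in> S \<Longrightarrow> s \<le> (1::real)) \<Longrightarrow> bdd_above S"
  by (rule bdd_aboveI[of _ 1]) auto

lemma bdd_below0: "(\<And>s. s \<in> S \<Longrightarrow> (0::real) \<le> s) \<Longrightarrow> bdd_below S"
  by (rule bdd_belowI[of _ 0]) auto

lemma Sup01_nonneg: assumes "\<And>s. s \<in> S \<Longrightarrow> 0 \<le> s" "bdd_above S" shows "0 \<le> Sup01 S"
proof (cases "S = {}")
  case True then show ?thesis by (simp add: Sup01_def)
next
  case False then obtain x where "x \<in> S" by auto
  then show ?thesis using assms Sup01_upper[of x S] by force
qed

lemma Sup01_01: "(\<And>s. s \<in> S \<Longrightarrow> 0 \<le> s \<and> s \<le> 1) \<Longrightarrow> 0 \<le> Sup01 S \<and> Sup01 S \<le> 1"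
  using Sup01_least[of S 1] Sup01_nonneg[of S] bdd_above1[of S] by auto

lemma Inf01_01: assumes "\<And>s. s \<in> S \<Longrightarrow> 0 \<le> s \<and> s \<le> 1" shows "0 \<le> Inf01 S \<and> Inf01 S \<le> 1"
proof (cases "S = {}")
  case True then show ?thesis by (simp add: Inf01_def)
next
  case False then obtain x where "x \<in> S" by auto
  then show ?thesis using assms Inf01_lower[of x S] Inf01_greatest[of S 0] bdd_below0[of S] by force
qed

lemma fnbhd_01: "fuzzifying_topology X \<tau> \<Longrightarrow> 0 \<le> fnbhd X \<tau> x A \<and> fnbhd X \<tau> x A \<le> 1"
  unfolding fnbhd_def by (rule Sup01_01) (auto simp: fuzzifying_topology_def)

lemma fcl_01: "fuzzifying_topology X \<tau> \<Longrightarrow> 0 \<le> fcl X \<tau> A x \<and> fcl X \<tau> A x \<le> 1"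
  unfolding fcl_def using fnbhd_01[of X \<tau> x "X - A"] by auto

lemma fint_01: "fuzzifying_topology X \<tau> \<Longrightarrow> (\<And>y. 0 \<le> \<mu> y \<and> \<mu> y \<le> 1) \<Longrightarrow>
   0 \<le> fint X \<tau> \<mu> x \<and> fint X \<tau> \<mu> x \<le> 1"
  unfolding fint_def
proof (rule Sup01_01)
  fix s assume ft: "fuzzifying_topology X \<tau>" and mu: "\<And>y. 0 \<le> \<mu> y \<and> \<mu> y \<le> 1"
    and s: "s \<in> {min (\<tau> B) (Inf01 (\<mu> ` B)) |B. x \<in> B \<and> B \<subseteq> X}"
  then obtain B where B: "s = min (\<tau> B) (Inf01 (\<mu> ` B))" "B \<subseteq> X" by auto
  have "0 \<le> Inf01 (\<mu> ` B) \<and> Inf01 (\<mu> ` B) \<le> 1" by (rule Inf01_01) (use mu in auto)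
  moreover have "0 \<le> \<tau> B \<and> \<tau> B \<le> 1" using ft B(2) by (auto simp: fuzzifying_topology_def)
  ultimately show "0 \<le> s \<and> s \<le> 1" using B(1) by auto
qed

lemma tauP_01: "fuzzifying_topology X \<tau> \<Longrightarrow> 0 \<le> tauP X \<tau> A \<and> tauP X \<tau> A \<le> 1"
  unfolding tauP_def by (rule Inf01_01) (auto intro!: fint_01 fcl_01)

lemma FP_01: "fuzzifying_topology X \<tau> \<Longrightarrow> 0 \<le> FP X \<tau> A \<and> FP X \<tau> A \<le> 1"
  unfolding FP_def by (rule tauP_01)

lemma NP_01: "fuzzifying_topology X \<tau> \<Longrightarrow> 0 \<le> NP X \<tau> x A \<and> NP X \<tau> x A \<le> 1"
  unfolding NP_def by (rule Sup01_01) (auto dest: tauP_01)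

lemma tauP_rel_01: "fuzzifying_topology X \<tau> \<Longrightarrow> 0 \<le> tauP_rel X \<tau> G B \<and> tauP_rel X \<tau> G B \<le> 1"
  unfolding tauP_rel_def by (rule Sup01_01) (auto dest: tauP_01)

lemma NPsub_01: "fuzzifying_topology X \<tau> \<Longrightarrow> 0 \<le> NPsub X \<tau> A x G \<and> NPsub X \<tau> A x G \<le> 1"
  unfolding NPsub_def by (rule Sup01_01) (auto dest: tauP_rel_01)

lemma Kdeg_01: assumes "fam01 G R" shows "0 \<le> Kdeg R G \<and> Kdeg R G \<le> 1"
  unfolding Kdeg_def
proof (rule Inf01_01)
  fix s assume "s \<in> (\<lambda>x. Sup01 {R B | B. x \<in> B \<and> B \<subseteq> G}) ` G"
  then obtain x where s: "s = Sup01 {R B | B. x \<in> B \<and> B \<subseteq> G}" by blast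
  have "0 \<le> Sup01 {R B | B. x \<in> B \<and> B \<subseteq> G} \<and> Sup01 {R B | B. x \<in> B \<and> B \<subseteq> G} \<le> 1"
  proof (rule Sup01_01)
    fix t assume "t \<in> {R B | B. x \<in> B \<and> B \<subseteq> G}"
    then obtain B where "t = R B" "B \<subseteq> G" by blast
    then show "0 \<le> t \<and> t \<le> 1" using assms unfolding fam01_def by blast
  qed
  then show "0 \<le> s \<and> s \<le> 1" using s by simp
qed

lemma subdeg_01: assumes "fam01 G R" "\<And>B. B \<subseteq> G \<Longrightarrow> 0 \<le> \<rho> B"
  shows "0 \<le> subdeg G R \<rho> \<and> subdeg G R \<rho> \<le> 1"
  unfolding subdeg_def
proof (rule Inf01_01)
  fix s assume "s \<in> {min 1 (1 - R B + \<rho> B) | B. B \<subseteq> G}"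
  then obtain B where s: "s = min 1 (1 - R B + \<rho> B)" "B \<subseteq> G" by blast
  have "R B \<le> 1" using assms(1) s(2) unfolding fam01_def by blast
  moreover have "0 \<le> \<rho> B" using assms(2) s(2) .
  ultimately show "0 \<le> s \<and> s \<le> 1" using s(1) by simp
qed

lemma FFdeg_01: "0 \<le> FFdeg G P \<and> FFdeg G P \<le> 1"
proof -
  have "0 \<le> Inf01 {\<delta>. 0 \<le> \<delta> \<and> \<delta> \<le> 1 \<and> finite {B. B \<subseteq> G \<and> P B > \<delta>}} \<and>
        Inf01 {\<delta>. 0 \<le> \<delta> \<and> \<delta> \<le> 1 \<and> finite {B. B \<subseteq> G \<and> P B > \<delta>}} \<le> 1"
    by (rule Inf01_01) simp
  then show ?thesis unfolding FFdeg_def by simp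
qed

lemma Gamma_inner_01: "0 \<le> Sup01 {max 0 (Kdeg P G + FFdeg G P - 1) | P.
                   fam01 G P \<and> (\<forall>B. B \<subseteq> G \<longrightarrow> P B \<le> R B)} \<and> Sup01 {max 0 (Kdeg P G + FFdeg G P - 1) | P.
                   fam01 G P \<and> (\<forall>B. B \<subseteq> G \<longrightarrow> P B \<le> R B)} \<le> 1"
proof (rule Sup01_01)
  fix s assume "s \<in> {max 0 (Kdeg P G + FFdeg G P - 1) | P.
                   fam01 G P \<and> (\<forall>B. B \<subseteq> G \<longrightarrow> P B \<le> R B)}"
  then obtain P where s: "s = max 0 (Kdeg P G + FFdeg G P - 1)" "fam01 G P" by blast
  show "0 \<le> s \<and> s \<le> 1" using s Kdeg_01[OF s(2)] FFdeg_01[of G P] by linarith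
qed

lemma Gamma_elem_01:
  assumes "fam01 G R" "\<And>B. B \<subseteq> G \<Longrightarrow> 0 \<le> \<rho> B"
  shows "0 \<le> min 1 (1 - max 0 (Kdeg R G + subdeg G R \<rho> - 1)
        + Sup01 {max 0 (Kdeg P G + FFdeg G P - 1) | P.
                   fam01 G P \<and> (\<forall>B. B \<subseteq> G \<longrightarrow> P B \<le> R B)})"
proof -
  have "0 \<le> subdeg G R \<rho> \<and> subdeg G R \<rho> \<le> 1" by (rule subdeg_01[OF assms(1)]) (rule assms(2))
  then show ?thesis using Kdeg_01[OF assms(1)] Gamma_inner_01[of G R] by linarith
qed

lemma Gamma_01: assumes "\<And>B. B \<subseteq> G \<Longrightarrow> 0 \<le> \<rho> B" shows "0 \<le> Gamma G \<rho> \<and> Gamma G \<rho> \<le> 1"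
  unfolding Gamma_def
proof (rule Inf01_01)
  fix s assume "s \<in> {min 1 (1 - max 0 (Kdeg R G + subdeg G R \<rho> - 1)
        + Sup01 {max 0 (Kdeg P G + FFdeg G P - 1) | P.
                   fam01 G P \<and> (\<forall>B. B \<subseteq> G \<longrightarrow> P B \<le> R B)}) | R. fam01 G R}"
  then obtain R where "fam01 G R" and s: "s = min 1 (1 - max 0 (Kdeg R G + subdeg G R \<rho> - 1)
        + Sup01 {max 0 (Kdeg P G + FFdeg G P - 1) | P.
                   fam01 G P \<and> (\<forall>B. B \<subseteq> G \<longrightarrow> P B \<le> R B)})" by blast
  from Gamma_elem_01[OF this(1) assms] s show "0 \<le> s \<and> s \<le> 1" by simp
qed

lemma GammaP_01: "fuzzifying_topology X \<tau> \<Longrightarrow> 0 \<le> GammaP X \<tau> G \<and> GammaP X \<tau> G \<le> 1"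
  unfolding GammaP_def by (rule Gamma_01) (auto dest: tauP_rel_01)

lemma Gamma_closed:
  assumes ft: "fuzzifying_topology X \<tau>" and BX: "B \<subseteq> X"
  shows "GammaP X \<tau> B + FP X \<tau> A - 1 \<le> GammaP X \<tau> (B \<inter> A)"
proof -
  define G where "G = B \<inter> A"
  define F where "F = FP X \<tau> A"
  define \<rho>B where "\<rho>B = tauP_rel X \<tau> B"
  define \<rho>G where "\<rho>G = tauP_rel X \<tau> G"
  define SB where "SB Q = Sup01 {max 0 (Kdeg P B + FFdeg B P - 1) | P. fam01 B P \<and> (\<forall>C. C \<subseteq> B \<longrightarrow> P C \<le> Q C)}" for Q
  define SG where "SG Q = Sup01 {max 0 (Kdeg P G + FFdeg G P - 1) | P. fam01 G P \<and> (\<forall>C. C \<subseteq> G \<longrightarrow> P C \<le> Q C)}" for Q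
  have F01: "0 \<le> F \<and> F \<le> 1" using FP_01[OF ft] F_def by simp
  have \<rho>B01: "\<And>E. 0 \<le> \<rho>B E \<and> \<rho>B E \<le> 1" using tauP_rel_01[OF ft] \<rho>B_def by simp
  have \<rho>G01: "\<And>E. 0 \<le> \<rho>G E \<and> \<rho>G E \<le> 1" using tauP_rel_01[OF ft] \<rho>G_def by simp
  have GB01: "0 \<le> Gamma B \<rho>B \<and> Gamma B \<rho>B \<le> 1" by (rule Gamma_01) (use \<rho>B01 in simp)
  have GamB: "Gamma B \<rho>B = Inf01 {min 1 (1 - max 0 (Kdeg R B + subdeg B R \<rho>B - 1) + SB R) | R. fam01 B R}"
    by (simp add: Gamma_def SB_def)
  have GamG: "Gamma G \<rho>G = Inf01 {min 1 (1 - max 0 (Kdeg R G + subdeg G R \<rho>G - 1) + SG R) | R. fam01 G R}"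
    by (simp add: Gamma_def SG_def)
  have "Gamma B \<rho>B + F - 1 \<le> Gamma G \<rho>G"
    unfolding GamG
  proof (rule Inf01_greatest)
    fix s assume "s \<in> {min 1 (1 - max 0 (Kdeg R G + subdeg G R \<rho>G - 1) + SG R) | R. fam01 G R}"
    then obtain R where R: "fam01 G R" and s: "s = min 1 (1 - max 0 (Kdeg R G + subdeg G R \<rho>G - 1) + SG R)"
      by blast
    have Rb: "\<And>C. C \<subseteq> G \<Longrightarrow> 0 \<le> R C \<and> R C \<le> 1" using R unfolding fam01_def by blast
    define a where "a = max 0 (Kdeg R G + subdeg G R \<rho>G - 1)"
    have K01: "0 \<le> Kdeg R G \<and> Kdeg R G \<le> 1" by (rule Kdeg_01[OF R])
    have sub01: "0 \<le> subdeg G R \<rho>G \<and> subdeg G R \<rho>G \<le> 1" by (rule subdeg_01[OF R]) (use \<rho>G01 in simp)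
    have a01: "0 \<le> a \<and> a \<le> 1" using K01 sub01 a_def by linarith
    define R' where "R' E = (if E = B - A then max F (min (R (E \<inter> A)) (\<rho>B E)) else min (R (E \<inter> A)) (\<rho>B E))" for E
    have R'01: "0 \<le> R' E \<and> R' E \<le> 1" if "E \<subseteq> B" for E
    proof -
      have h: "0 \<le> R (E' \<inter> A) \<and> R (E' \<inter> A) \<le> 1" if "E' \<subseteq> B" for E'
        using that by (intro Rb) (auto simp: G_def)
      show ?thesis using h[OF that] h[of "B - A"] \<rho>B01[of E] \<rho>B01[of "B - A"] F01
        by (auto simp: R'_def)
    qed
    have fR': "fam01 B R'" unfolding fam01_def using R'01 by blast
    have FleB: "F \<le> \<rho>B (B - A)"
      unfolding F_def FP_def \<rho>B_def tauP_rel_def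
    proof (rule Sup01_upper)
      show "tauP X \<tau> (X - A) \<in> {tauP X \<tau> V |V. V \<subseteq> X \<and> V \<inter> B = B - A}" using BX by blast
      show "bdd_above {tauP X \<tau> V |V. V \<subseteq> X \<and> V \<inter> B = B - A}"
        by (rule bdd_above1) (use tauP_01[OF ft] in blast)
    qed
    have R'le: "R' E \<le> \<rho>B E" for E
      using FleB by (simp add: R'_def)
    have sub1: "1 \<le> subdeg B R' \<rho>B"
      unfolding subdeg_def
    proof (rule Inf01_greatest)
      fix t assume "t \<in> {min 1 (1 - R' E + \<rho>B E) |E. E \<subseteq> B}"
      then obtain E where "t = min 1 (1 - R' E + \<rho>B E)" by blast
      then show "1 \<le> t" using R'le[of E] by simp
    qed simp
    define K' where "K' = Kdeg R' B"
    have GBle: "Gamma B \<rho>B \<le> min 1 (1 - max 0 (K' + subdeg B R' \<rho>B - 1) + SB R')"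
      unfolding GamB K'_def
    proof (rule Inf01_lower)
      show "min 1 (1 - max 0 (Kdeg R' B + subdeg B R' \<rho>B - 1) + SB R')
        \<in> {min 1 (1 - max 0 (Kdeg R B + subdeg B R \<rho>B - 1) + SB R) | R. fam01 B R}" using fR' by blast
      show "bdd_below {min 1 (1 - max 0 (Kdeg R B + subdeg B R \<rho>B - 1) + SB R) | R. fam01 B R}"
      proof (rule bdd_below0)
        fix t assume "t \<in> {min 1 (1 - max 0 (Kdeg R B + subdeg B R \<rho>B - 1) + SB R) | R. fam01 B R}"
        then obtain Q where Q: "fam01 B Q" and t: "t = min 1 (1 - max 0 (Kdeg Q B + subdeg B Q \<rho>B - 1) + SB Q)"
          by blast
        show "0 \<le> t" unfolding t SB_def by (rule Gamma_elem_01[OF Q]) (use \<rho>B01 in simp)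
      qed
    qed
    have KR': "a + F - 1 \<le> K'"
      unfolding K'_def Kdeg_def
    proof (rule Inf01_greatest)
      fix t assume "t \<in> (\<lambda>x. Sup01 {R' E | E. x \<in> E \<and> E \<subseteq> B}) ` B"
      then obtain x where x: "x \<in> B" and t: "t = Sup01 {R' E | E. x \<in> E \<and> E \<subseteq> B}" by blast
      define Y where "Y = {R' E | E. x \<in> E \<and> E \<subseteq> B}"
      have bY: "bdd_above Y"
      proof (rule bdd_above1)
        fix y assume "y \<in> Y" then obtain E where "y = R' E" "E \<subseteq> B" unfolding Y_def by blast
        then show "y \<le> 1" using R'01 by blast
      qed
      have Y0: "0 \<le> Sup01 Y"
      proof (rule Sup01_nonneg[OF _ bY])
        fix y assume "y \<in> Y" then obtain E where "y = R' E" "E \<subseteq> B" unfolding Y_def by blast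
        then show "0 \<le> y" using R'01 by blast
      qed
      show "a + F - 1 \<le> t"
      proof (cases "x \<in> A")
        case False
        then have "R' (B - A) \<in> Y" using x unfolding Y_def by blast
        then have "R' (B - A) \<le> Sup01 Y" using bY by (rule Sup01_upper)
        moreover have "F \<le> R' (B - A)" by (simp add: R'_def)
        ultimately show ?thesis using a01 t Y_def by simp
      next
        case True
        then have xG: "x \<in> G" using x by (simp add: G_def)
        define Z where "Z = {R C | C. x \<in> C \<and> C \<subseteq> G}"
        have "Kdeg R G \<le> Sup01 Z"
          unfolding Kdeg_def Z_def
        proof (rule Inf01_lower)
          show "Sup01 {R C |C. x \<in> C \<and> C \<subseteq> G} \<in> (\<lambda>x. Sup01 {R B |B. x \<in> B \<and> B \<subseteq> G}) ` G"
            using xG by blast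
          show "bdd_below ((\<lambda>x. Sup01 {R B |B. x \<in> B \<and> B \<subseteq> G}) ` G)"
          proof (rule bdd_below0)
            fix y assume "y \<in> (\<lambda>x. Sup01 {R B |B. x \<in> B \<and> B \<subseteq> G}) ` G"
            then obtain z where y: "y = Sup01 {R B |B. z \<in> B \<and> B \<subseteq> G}" by blast
            have "0 \<le> Sup01 {R B |B. z \<in> B \<and> B \<subseteq> G} \<and> Sup01 {R B |B. z \<in> B \<and> B \<subseteq> G} \<le> 1"
              by (rule Sup01_01) (use Rb in blast)
            then show "0 \<le> y" using y by simp
          qed
        qed
        moreover have "Sup01 Z \<le> Sup01 Y + 1 - subdeg G R \<rho>G"
        proof (rule Sup01_least)
          fix z assume "z \<in> Z"
          then obtain C where z: "z = R C" and xC: "x \<in> C" and CG: "C \<subseteq> G" unfolding Z_def by blast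
          have "subdeg G R \<rho>G \<le> min 1 (1 - R C + \<rho>G C)"
            unfolding subdeg_def
          proof (rule Inf01_lower)
            show "min 1 (1 - R C + \<rho>G C) \<in> {min 1 (1 - R B + \<rho>G B) |B. B \<subseteq> G}" using CG by blast
            show "bdd_below {min 1 (1 - R B + \<rho>G B) |B. B \<subseteq> G}"
            proof (rule bdd_below0)
              fix y assume "y \<in> {min 1 (1 - R B + \<rho>G B) |B. B \<subseteq> G}"
              then obtain D where "y = min 1 (1 - R D + \<rho>G D)" "D \<subseteq> G" by blast
              then show "0 \<le> y" using Rb[of D] \<rho>G01[of D] by simp
            qed
          qed
          moreover have "min (R C) (\<rho>G C) \<le> Sup01 Y"
          proof (cases "R C \<le> Sup01 Y")
            case True then show ?thesis by simp
          next
            case False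
            have "\<rho>G C \<le> Sup01 Y"
              unfolding \<rho>G_def tauP_rel_def
            proof (rule Sup01_least[OF _ Y0])
              fix v assume "v \<in> {tauP X \<tau> V |V. V \<subseteq> X \<and> V \<inter> G = C}"
              then obtain V where v: "v = tauP X \<tau> V" and VX: "V \<subseteq> X" and VG: "V \<inter> G = C" by blast
              have EA: "(V \<inter> B) \<inter> A = C" using VG by (auto simp: G_def)
              have "x \<in> V \<inter> B" using xC VG x by blast
              then have "R' (V \<inter> B) \<in> Y" unfolding Y_def by blast
              then have R'Y: "R' (V \<inter> B) \<le> Sup01 Y" using bY by (rule Sup01_upper)
              have "tauP X \<tau> V \<le> \<rho>B (V \<inter> B)"
                unfolding \<rho>B_def tauP_rel_def
              proof (rule Sup01_upper)
                show "tauP X \<tau> V \<in> {tauP X \<tau> W |W. W \<subseteq> X \<and> W \<inter> B = V \<inter> B}" using VX by blast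
                show "bdd_above {tauP X \<tau> W |W. W \<subseteq> X \<and> W \<inter> B = V \<inter> B}"
                  by (rule bdd_above1) (use tauP_01[OF ft] in blast)
              qed
              moreover have "min (R C) (\<rho>B (V \<inter> B)) \<le> R' (V \<inter> B)"
                unfolding R'_def EA by simp
              ultimately show "v \<le> Sup01 Y" using R'Y False v by linarith
            qed
            then show ?thesis by simp
          qed
          ultimately show "z \<le> Sup01 Y + 1 - subdeg G R \<rho>G" using z by linarith
        next
          show "0 \<le> Sup01 Y + 1 - subdeg G R \<rho>G" using Y0 sub01 by linarith
        qed
        ultimately have "a \<le> Sup01 Y" using Y0 a_def by linarith
        then show ?thesis using F01 t Y_def by simp
      qed
    next
      show "a + F - 1 \<le> 1" using a01 F01 by linarith
    qed
    have SS: "SB R' \<le> SG R"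
      unfolding SB_def
    proof (rule Sup01_least)
      fix u assume "u \<in> {max 0 (Kdeg P B + FFdeg B P - 1) | P. fam01 B P \<and> (\<forall>C. C \<subseteq> B \<longrightarrow> P C \<le> R' C)}"
      then obtain P' where u: "u = max 0 (Kdeg P' B + FFdeg B P' - 1)" and fP': "fam01 B P'"
        and P'le: "\<forall>C. C \<subseteq> B \<longrightarrow> P' C \<le> R' C" by blast
      have P'01: "\<And>E. E \<subseteq> B \<Longrightarrow> 0 \<le> P' E \<and> P' E \<le> 1" using fP' unfolding fam01_def by blast
      define P where "P C = Sup01 {P' E | E. E \<subseteq> B \<and> E \<inter> A = C \<and> E \<noteq> B - A}" for C
      have bddP: "bdd_above {P' E | E. E \<subseteq> B \<and> E \<inter> A = C \<and> E \<noteq> B - A}" for C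
        by (rule bdd_above1) (use P'01 in blast)
      have P01: "0 \<le> P C \<and> P C \<le> 1" for C
        unfolding P_def by (rule Sup01_01) (use P'01 in blast)
      have fP: "fam01 G P" unfolding fam01_def using P01 by blast
      have PleR: "\<forall>C. C \<subseteq> G \<longrightarrow> P C \<le> R C"
      proof (intro allI impI)
        fix C assume CG: "C \<subseteq> G"
        show "P C \<le> R C" unfolding P_def
        proof (rule Sup01_least)
          fix y assume "y \<in> {P' E | E. E \<subseteq> B \<and> E \<inter> A = C \<and> E \<noteq> B - A}"
          then obtain E where y: "y = P' E" "E \<subseteq> B" "E \<inter> A = C" "E \<noteq> B - A" by blast
          have "P' E \<le> R' E" using P'le y(2) by blast
          also have "R' E \<le> R C" using y(3,4) by (simp add: R'_def)
          finally show "y \<le> R C" using y(1) by simp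
        next
          show "0 \<le> R C" using Rb[OF CG] by simp
        qed
      qed
      have Pge: "P' E \<le> P (E \<inter> A)" if "E \<subseteq> B" "E \<noteq> B - A" for E
        unfolding P_def by (rule Sup01_upper[OF _ bddP]) (use that in blast)
      have KK: "Kdeg P' B \<le> Kdeg P G"
        unfolding Kdeg_def[of P G]
      proof (rule Inf01_greatest)
        fix t assume "t \<in> (\<lambda>x. Sup01 {P C | C. x \<in> C \<and> C \<subseteq> G}) ` G"
        then obtain x where xG: "x \<in> G" and t: "t = Sup01 {P C | C. x \<in> C \<and> C \<subseteq> G}" by blast
        have bT: "bdd_above {P C | C. x \<in> C \<and> C \<subseteq> G}"
          by (rule bdd_above1) (use P01 in blast)
        have t0: "0 \<le> t" unfolding t by (rule Sup01_nonneg[OF _ bT]) (use P01 in blast)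
        have "Kdeg P' B \<le> Sup01 {P' E | E. x \<in> E \<and> E \<subseteq> B}"
          unfolding Kdeg_def
        proof (rule Inf01_lower)
          show "Sup01 {P' E | E. x \<in> E \<and> E \<subseteq> B} \<in> (\<lambda>x. Sup01 {P' B' | B'. x \<in> B' \<and> B' \<subseteq> B}) ` B"
            using xG by (auto simp: G_def)
          show "bdd_below ((\<lambda>x. Sup01 {P' B' | B'. x \<in> B' \<and> B' \<subseteq> B}) ` B)"
          proof (rule bdd_below0)
            fix y assume "y \<in> (\<lambda>x. Sup01 {P' B' | B'. x \<in> B' \<and> B' \<subseteq> B}) ` B"
            then obtain z where y: "y = Sup01 {P' B' | B'. z \<in> B' \<and> B' \<subseteq> B}" by blast
            have "0 \<le> Sup01 {P' B' | B'. z \<in> B' \<and> B' \<subseteq> B} \<and> Sup01 {P' B' | B'. z \<in> B' \<and> B' \<subseteq> B} \<le> 1"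
              by (rule Sup01_01) (use P'01 in blast)
            then show "0 \<le> y" using y by simp
          qed
        qed
        also have "Sup01 {P' E | E. x \<in> E \<and> E \<subseteq> B} \<le> t"
        proof (rule Sup01_least[OF _ t0])
          fix y assume "y \<in> {P' E | E. x \<in> E \<and> E \<subseteq> B}"
          then obtain E where y: "y = P' E" "x \<in> E" "E \<subseteq> B" by blast
          have "E \<noteq> B - A" using y(2) xG by (auto simp: G_def)
          then have "y \<le> P (E \<inter> A)" using Pge y by simp
          also have "P (E \<inter> A) \<le> t" unfolding t
            by (rule Sup01_upper[OF _ bT]) (use y xG in \<open>auto simp: G_def\<close>)
          finally show "y \<le> t" .
        qed
        finally show "Kdeg P' B \<le> t" .
      next
        show "Kdeg P' B \<le> 1" using Kdeg_01[OF fP'] by simp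
      qed
      have FF: "FFdeg B P' \<le> FFdeg G P"
      proof -
        define DP' where "DP' = {\<delta>. 0 \<le> \<delta> \<and> \<delta> \<le> 1 \<and> finite {E. E \<subseteq> B \<and> P' E > \<delta>}}"
        define DP where "DP = {\<delta>. 0 \<le> \<delta> \<and> \<delta> \<le> 1 \<and> finite {C. C \<subseteq> G \<and> P C > \<delta>}}"
        have bDP: "bdd_below DP" by (rule bdd_below0) (simp add: DP_def)
        have "Inf01 DP \<le> Inf01 DP'"
        proof (rule Inf01_greatest)
          fix \<delta> assume "\<delta> \<in> DP'"
          then have d: "0 \<le> \<delta>" "\<delta> \<le> 1" "finite {E. E \<subseteq> B \<and> P' E > \<delta>}" unfolding DP'_def by auto
          have sub: "{C. C \<subseteq> G \<and> P C > \<delta>} \<subseteq> (\<lambda>E. E \<inter> A) ` {E. E \<subseteq> B \<and> P' E > \<delta>}"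
          proof
            fix C assume "C \<in> {C. C \<subseteq> G \<and> P C > \<delta>}"
            then have PC: "P C > \<delta>" by simp
            have "\<exists>E. E \<subseteq> B \<and> E \<inter> A = C \<and> E \<noteq> B - A \<and> P' E > \<delta>"
            proof (rule ccontr)
              assume "\<not> ?thesis"
              then have "P C \<le> \<delta>" unfolding P_def
                by (intro Sup01_least[OF _ d(1)]) (auto simp: not_less)
              then show False using PC by simp
            qed
            then show "C \<in> (\<lambda>E. E \<inter> A) ` {E. E \<subseteq> B \<and> P' E > \<delta>}" by blast
          qed
          have "finite {C. C \<subseteq> G \<and> P C > \<delta>}"
            by (rule finite_subset[OF sub]) (use d(3) in blast)
          then have "\<delta> \<in> DP" using d unfolding DP_def by blast
          then show "Inf01 DP \<le> \<delta>" using bDP by (rule Inf01_lower)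
        next
          show "Inf01 DP \<le> 1" using Inf01_01[of DP] by (auto simp: DP_def)
        qed
        then show ?thesis unfolding FFdeg_def DP_def DP'_def by simp
      qed
      have "max 0 (Kdeg P G + FFdeg G P - 1) \<le> SG R"
        unfolding SG_def
      proof (rule Sup01_upper)
        show "max 0 (Kdeg P G + FFdeg G P - 1) \<in> {max 0 (Kdeg P G + FFdeg G P - 1) | P. fam01 G P \<and> (\<forall>C. C \<subseteq> G \<longrightarrow> P C \<le> R C)}"
          using fP PleR by blast
        show "bdd_above {max 0 (Kdeg P G + FFdeg G P - 1) | P. fam01 G P \<and> (\<forall>C. C \<subseteq> G \<longrightarrow> P C \<le> R C)}"
        proof (rule bdd_above1)
          fix y assume "y \<in> {max 0 (Kdeg P G + FFdeg G P - 1) | P. fam01 G P \<and> (\<forall>C. C \<subseteq> G \<longrightarrow> P C \<le> R C)}"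
          then obtain Q where "y = max 0 (Kdeg Q G + FFdeg G Q - 1)" "fam01 G Q" by blast
          then show "y \<le> 1" using Kdeg_01[of G Q] FFdeg_01[of G Q] by simp
        qed
      qed
      then show "u \<le> SG R" using u KK FF by simp
    next
      show "0 \<le> SG R" using Gamma_inner_01[of G R] by (simp add: SG_def)
    qed
    have "K' + subdeg B R' \<rho>B - 1 \<le> max 0 (K' + subdeg B R' \<rho>B - 1)" by simp
    then have "Gamma B \<rho>B \<le> 1 - K' + SB R'" using GBle sub1 by linarith
    then have "Gamma B \<rho>B + F - 1 \<le> 1 - a + SG R" using KR' SS by linarith
    moreover have "Gamma B \<rho>B + F - 1 \<le> 1" using GB01 F01 by linarith
    moreover have "s = min 1 (1 - a + SG R)" using s a_def by simp
    ultimately show "Gamma B \<rho>B + F - 1 \<le> s" by simp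
  next
    show "Gamma B \<rho>B + F - 1 \<le> 1" using GB01 F01 by linarith
  qed
  then show ?thesis by (simp add: GammaP_def G_def F_def \<rho>B_def \<rho>G_def)
qed

lemma NP_le_NPsub:
  assumes ft: "fuzzifying_topology X \<tau>" and xA: "x \<in> A"
  shows "NP X \<tau> x B \<le> NPsub X \<tau> A x (B \<inter> A)"
  unfolding NP_def
proof (rule Sup01_least)
  fix v assume "v \<in> {tauP X \<tau> V | V. x \<in> V \<and> V \<subseteq> B \<and> V \<subseteq> X}"
  then obtain V where v: "v = tauP X \<tau> V" and V: "x \<in> V" "V \<subseteq> B" "V \<subseteq> X" by blast
  have "tauP X \<tau> V \<le> tauP_rel X \<tau> A (V \<inter> A)"
    unfolding tauP_rel_def
  proof (rule Sup01_upper)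
    show "tauP X \<tau> V \<in> {tauP X \<tau> W |W. W \<subseteq> X \<and> W \<inter> A = V \<inter> A}" using V by blast
    show "bdd_above {tauP X \<tau> W |W. W \<subseteq> X \<and> W \<inter> A = V \<inter> A}"
      by (rule bdd_above1) (use tauP_01[OF ft] in blast)
  qed
  also have "tauP_rel X \<tau> A (V \<inter> A) \<le> NPsub X \<tau> A x (B \<inter> A)"
    unfolding NPsub_def
  proof (rule Sup01_upper)
    show "tauP_rel X \<tau> A (V \<inter> A) \<in> {tauP_rel X \<tau> A C |C. x \<in> C \<and> C \<subseteq> B \<inter> A}" using V xA by blast
    show "bdd_above {tauP_rel X \<tau> A C |C. x \<in> C \<and> C \<subseteq> B \<inter> A}"
      by (rule bdd_above1) (use tauP_rel_01[OF ft] in blast)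
  qed
  finally show "v \<le> NPsub X \<tau> A x (B \<inter> A)" using v by simp
next
  show "0 \<le> NPsub X \<tau> A x (B \<inter> A)" using NPsub_01[OF ft] by simp
qed

theorem theorem4p1:
  fixes X A :: "'a set" and \<tau> :: "'a set \<Rightarrow> real"
  assumes "fuzzifying_topology X \<tau>" and "A \<subseteq> X"
  shows "max 0 (LPC X \<tau> + FP X \<tau> A - 1) \<le> LPC_sub X \<tau> A"
proof -
  note ft = assms(1)
  define F where "F = FP X \<tau> A"
  define f where "f x = Sup01 {max 0 (NPsub X \<tau> A x G + GammaP X \<tau> G - 1) | G. G \<subseteq> A}" for x
  define g where "g x = Sup01 {max 0 (NP X \<tau> x B + GammaP X \<tau> B - 1) | B. B \<subseteq> X}" for x
  have F01: "0 \<le> F \<and> F \<le> 1" using FP_01[OF ft] F_def by simp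
  have g01: "0 \<le> g x \<and> g x \<le> 1" for x
    unfolding g_def
  proof (rule Sup01_01)
    fix s assume "s \<in> {max 0 (NP X \<tau> x B + GammaP X \<tau> B - 1) | B. B \<subseteq> X}"
    then obtain B where "s = max 0 (NP X \<tau> x B + GammaP X \<tau> B - 1)" by blast
    then show "0 \<le> s \<and> s \<le> 1" using NP_01[OF ft, of x B] GammaP_01[OF ft, of B] by simp
  qed
  have bf: "bdd_above {max 0 (NPsub X \<tau> A x G + GammaP X \<tau> G - 1) | G. G \<subseteq> A}" for x
  proof (rule bdd_above1)
    fix s assume "s \<in> {max 0 (NPsub X \<tau> A x G + GammaP X \<tau> G - 1) | G. G \<subseteq> A}"
    then obtain G where "s = max 0 (NPsub X \<tau> A x G + GammaP X \<tau> G - 1)" by blast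
    then show "s \<le> 1" using NPsub_01[OF ft, of A x G] GammaP_01[OF ft, of G] by simp
  qed
  have f0: "0 \<le> f x" for x
    unfolding f_def by (rule Sup01_nonneg[OF _ bf]) auto
  have L: "LPC X \<tau> = Inf01 (g ` X)" by (simp add: LPC_def g_def)
  have LS: "LPC_sub X \<tau> A = Inf01 (f ` A)" by (simp add: LPC_sub_def f_def)
  have L01: "0 \<le> Inf01 (g ` X) \<and> Inf01 (g ` X) \<le> 1" by (rule Inf01_01) (use g01 in blast)
  have "max 0 (Inf01 (g ` X) + F - 1) \<le> Inf01 (f ` A)"
  proof (rule Inf01_greatest)
    fix t assume "t \<in> f ` A"
    then obtain x where xA: "x \<in> A" and t: "t = f x" by blast
    have xX: "x \<in> X" using xA assms(2) by blast
    have "Inf01 (g ` X) \<le> g x"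
      by (rule Inf01_lower) (use xX g01 in \<open>auto intro!: bdd_below0\<close>)
    moreover have "g x \<le> f x + 1 - F"
      unfolding g_def
    proof (rule Sup01_least)
      fix y assume "y \<in> {max 0 (NP X \<tau> x B + GammaP X \<tau> B - 1) | B. B \<subseteq> X}"
      then obtain B where y: "y = max 0 (NP X \<tau> x B + GammaP X \<tau> B - 1)" and BX: "B \<subseteq> X" by blast
      have 1: "NP X \<tau> x B \<le> NPsub X \<tau> A x (B \<inter> A)" by (rule NP_le_NPsub[OF ft xA])
      have 2: "GammaP X \<tau> B + F - 1 \<le> GammaP X \<tau> (B \<inter> A)"
        unfolding F_def by (rule Gamma_closed[OF ft BX])
      have 3: "max 0 (NPsub X \<tau> A x (B \<inter> A) + GammaP X \<tau> (B \<inter> A) - 1) \<le> f x"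
        unfolding f_def by (rule Sup01_upper[OF _ bf]) blast
      have "NPsub X \<tau> A x (B \<inter> A) + GammaP X \<tau> (B \<inter> A) - 1 \<le> max 0 (NPsub X \<tau> A x (B \<inter> A) + GammaP X \<tau> (B \<inter> A) - 1)"
        by simp
      then show "y \<le> f x + 1 - F" using y 1 2 3 f0[of x] F01 by simp
    next
      show "0 \<le> f x + 1 - F" using f0[of x] F01 by simp
    qed
    ultimately show "max 0 (Inf01 (g ` X) + F - 1) \<le> t" using t f0[of x] by simp
  next
    show "max 0 (Inf01 (g ` X) + F - 1) \<le> 1" using L01 F01 by simp
  qed
  then show ?thesis using L LS F_def by simp
qed

end
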